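(* For all integers $k\ge 2$, all $l\in\{1,\dots,k-1\}$ and all $t\ge 0$, $$\Big\|\big(L_l\circ\cdots\circ L_{k-1}\big)(\phi_k(t))\Big\|_2\ \ge\ \big(L_l\circ\cdots\circ L_{k-1}\big)_d(\phi_k(t))\ \ge\ E^l(t),$$ where the subscript $d$ denotes the $d$-th coordinate. The same two inequalities hold with $\phi_k(t)$ replaced by $(0,\dots,0,E^k(t)+M)$.
   Context: Let $d\ge 3$, $Q=[-1,1]^{d-1}$, $\mathbb S_+=\{x\in\mathbb R^d:\|x\|_2=1,\ x_d\ge 0\}$, $\mathbb H_{\ge c}=\{x\in\mathbb R^d:x_d\ge c\}$. Let $h\colon Q\to\mathbb S_+$ be a bi-Lipschitz homeomorphism, $F(x)=e^{x_d}h(x_1,\dots,x_{d-1})$ on $Q\times\mathbb R$, extended to $\mathbb R^d$ by reflection (domain reflected in the hyperplanes $x_j=2n+1$, image reflected in $x_d=0$). Operator norm $\|A\|=\sup_{\|v\|_2=1}\|Av\|_2$, $l(A)=\inf_{\|v\|_2=1}\|Av\|_2$. Fix $\alpha\in(0,1)$, $m<M$, $M\ge1$ with $\|DF(x)\|\le\alpha$ a.e. for $x_d\le m$ and $l(DF(x))\ge1/\alpha$ a.e. for $x_d\ge M$. Fix $a\ge e^M-m$, $f(x)=F(x)-(0,\dots,0,a)$. For $r\in\mathbb Z^{d-1}$, $P(r)=\{x\in\mathbb R^{d-1}:|x_j-2r_j|<1\ \forall j\}$, $S=\{r\in\mathbb Z^{d-1}:\sum_jr_j\text{ even}\}$. For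 $r\in S$, $f$ maps $P(r)\times\mathbb R$ bijectively onto $\mathbb H_{>-a}$ and $f(P(r)\times(M,\infty))\supset\mathbb H_{\ge M}$; let $\Lambda^r\colon\mathbb H_{\ge M}\to P(r)\times(M,\infty)$ be the corresponding branch of $f^{-1}$. Let $E(t)=e^t-1$ on $[0,\infty)$ with iterates $E^k$. Fix a sequence $\underline s=(s_k)_{k\ge0}$ with $s_k\in S$, write $L_k=\Lambda^{s_k}$, and $\phi_k(t)=L_k(0,\dots,0,E^{k+1}(t)+M)$ for $t\ge0$. *)

theory Defs
  imports "HOL-Analysis.Analysis"
begin

text \<open>Points of R^d are represented as pairs (y, x_d) with y in R^(d-1) = real^'m;
  the product norm is the Euclidean 2-norm; the d-th coordinate is snd.\<close>

definition cubeQ :: "(real^'m) set" where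
  "cubeQ = {y. \<forall>j. \<bar>y$j\<bar> \<le> 1}"

definition hemisphere :: "((real^'m) \<times> real) set" where
  "hemisphere = {z. norm z = 1 \<and> snd z \<ge> 0}"

definition bi_lipschitz_on :: "'a::metric_space set \<Rightarrow> ('a \<Rightarrow> 'b::metric_space) \<Rightarrow> bool" where
  "bi_lipschitz_on S h \<longleftrightarrow> (\<exists>C>0. \<forall>x\<in>S. \<forall>y\<in>S.
      dist (h x) (h y) \<le> C * dist x y \<and> dist x y \<le> C * dist (h x) (h y))"

text \<open>Index n of the interval [2n-1, 2n+1] containing s (number of reflections, signed).\<close>
definition refl_idx :: "real \<Rightarrow> int" where
  "refl_idx s = \<lfloor>(s + 1) / 2\<rfloor>"

text \<open>Triangle wave: folding of R onto [-1,1] by reflections in the points 2n+1.\<close>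
definition tri_fold :: "real \<Rightarrow> real" where
  "tri_fold s = (-1) ^ nat \<bar>refl_idx s\<bar> * (s - 2 * of_int (refl_idx s))"

definition fold_cube :: "real^'m \<Rightarrow> real^'m" where
  "fold_cube y = (\<chi> j. tri_fold (y$j))"

definition refl_count :: "real^'m \<Rightarrow> int" where
  "refl_count y = (\<Sum>j\<in>UNIV. refl_idx (y$j))"

definition flip_d :: "(real^'m) \<times> real \<Rightarrow> (real^'m) \<times> real" where
  "flip_d z = (fst z, - snd z)"

text \<open>F(x) = e^{x_d} h(x') on Q x R, extended by reflection: each reflection of the
  domain in a hyperplane x_j = 2n+1 corresponds to a reflection of the image in x_d = 0.\<close>
definition reflF :: "(real^'m \<Rightarrow> (real^'m) \<times> real) \<Rightarrow> (real^'m) \<times> real \<Rightarrow> (real^'m) \<times> real" where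
  "reflF h x = (if even (refl_count (fst x)) then id else flip_d)
                 (exp (snd x) *\<^sub>R h (fold_cube (fst x)))"

definition Pcell :: "int^'m \<Rightarrow> (real^'m) set" where
  "Pcell r = {y. \<forall>j. \<bar>y$j - 2 * of_int (r$j)\<bar> < 1}"

definition evenS :: "(int^'m) set" where
  "evenS = {r. even (\<Sum>j\<in>UNIV. r$j)}"

definition lower_norm :: "('a::real_normed_vector \<Rightarrow> 'b::real_normed_vector) \<Rightarrow> real" where
  "lower_norm A = (INF v\<in>{v. norm v = 1}. norm (A v))"

definition Eexp :: "real \<Rightarrow> real" where
  "Eexp t = exp t - 1"

definition branch :: "((real^'m) \<times> real \<Rightarrow> (real^'m) \<times> real) \<Rightarrow> int^'m \<Rightarrow> (real^'m) \<times> real \<Rightarrow> (real^'m) \<times> real" where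
  "branch f r = the_inv_into (Pcell r \<times> UNIV) f"

definition chain :: "(nat \<Rightarrow> 'a \<Rightarrow> 'a) \<Rightarrow> nat \<Rightarrow> nat \<Rightarrow> 'a \<Rightarrow> 'a" where
  "chain L l k = foldr (\<circ>) (map L [l..<k]) id"

end

theory Submission imports Defs begin

lemma refl_idx_cell: "\<bar>y - 2 * of_int r\<bar> < 1 \<Longrightarrow> refl_idx y = r"
  unfolding refl_idx_def by (intro floor_unique) (auto simp: abs_less_iff)

lemma tri_fold_cell: "\<bar>y - 2 * of_int r\<bar> < 1 \<Longrightarrow> tri_fold y = (-1) ^ nat \<bar>r\<bar> * (y - 2 * of_int r)"
  unfolding tri_fold_def using refl_idx_cell by simp

lemma tri_fold_abs: "\<bar>y - 2 * of_int r\<bar> < 1 \<Longrightarrow> \<bar>tri_fold y\<bar> < 1"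
  by (simp add: tri_fold_cell abs_mult)

lemma tri_fold_inv: "\<bar>u\<bar> < 1 \<Longrightarrow> tri_fold (2 * of_int r + (-1) ^ nat \<bar>r\<bar> * u) = u"
  and tri_fold_inv_cell: "\<bar>u\<bar> < 1 \<Longrightarrow> \<bar>(2 * of_int r + (-1) ^ nat \<bar>r\<bar> * u) - 2 * of_int r\<bar> < 1"
proof -
  assume u: "\<bar>u\<bar> < 1"
  have c: "\<bar>(2 * of_int r + (-1) ^ nat \<bar>r\<bar> * u) - 2 * of_int r\<bar> < 1"
    using u by (simp add: abs_mult)
  then show "\<bar>(2 * of_int r + (-1) ^ nat \<bar>r\<bar> * u) - 2 * of_int r\<bar> < 1" .
  show "tri_fold (2 * of_int r + (-1) ^ nat \<bar>r\<bar> * u) = u"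
  proof -
    have e: "((-1::real) ^ nat \<bar>r\<bar>) * (-1) ^ nat \<bar>r\<bar> = 1"
      by (simp flip: power_add)
    have "tri_fold (2 * of_int r + (-1) ^ nat \<bar>r\<bar> * u) = (-1) ^ nat \<bar>r\<bar> * ((2 * of_int r + (-1) ^ nat \<bar>r\<bar> * u) - 2 * of_int r)"
      by (rule tri_fold_cell[OF c])
    also have "\<dots> = ((-1) ^ nat \<bar>r\<bar> * (-1) ^ nat \<bar>r\<bar>) * u" by simp
    finally show ?thesis using e by simp
  qed
qed

lemma tri_fold_inj: "\<bar>y - 2 * of_int r\<bar> < 1 \<Longrightarrow> \<bar>z - 2 * of_int r\<bar> < 1 \<Longrightarrow> tri_fold y = tri_fold z \<Longrightarrow> y = z"
  by (simp add: tri_fold_cell)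

lemma refl_count_cell: "y \<in> Pcell r \<Longrightarrow> refl_count y = (\<Sum>j\<in>UNIV. r$j)"
  unfolding refl_count_def Pcell_def using refl_idx_cell by (auto intro: sum.cong)

lemma reflF_cell: "y \<in> Pcell r \<Longrightarrow> r \<in> evenS \<Longrightarrow> reflF h (y, s) = exp s *\<^sub>R h (fold_cube y)"
  unfolding reflF_def evenS_def using refl_count_cell[of y r] by simp

lemma fold_cube_cell: "y \<in> Pcell r \<Longrightarrow> fold_cube y \<in> cubeQ"
  unfolding Pcell_def cubeQ_def fold_cube_def using tri_fold_abs by (auto intro: less_imp_le)

lemma open_sub_cube:
  fixes U :: "(real^'m) set"
  assumes "open U" "U \<subseteq> cubeQ" "u \<in> U"
  shows "\<bar>u$j\<bar> < 1"
proof (rule ccontr)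
  assume "\<not> \<bar>u$j\<bar> < 1"
  moreover have "\<bar>u$j\<bar> \<le> 1" using assms unfolding cubeQ_def by auto
  ultimately have u1: "\<bar>u$j\<bar> = 1" by simp
  obtain e where e: "e > 0" "ball u e \<subseteq> U" using assms open_contains_ball by blast
  define w where "w = u + (e/2 * u$j) *\<^sub>R axis j 1"
  have "dist u w = e/2" unfolding w_def dist_norm using u1 e by (simp add: abs_mult)
  then have "w \<in> U" using e by auto
  then have "\<bar>w$j\<bar> \<le> 1" using assms unfolding cubeQ_def by auto
  moreover have "w$j = u$j * (1 + e/2)" unfolding w_def by (simp add: axis_def algebra_simps)
  ultimately show False using u1 e by (simp add: abs_mult)
qed

lemma hemi_chart:
  fixes p :: "real^'m"
  assumes "norm p < 1"
  shows "(p, sqrt (1 - (norm p)^2)) \<in> hemisphere"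
proof -
  have "(norm p)^2 < 1" using assms by (simp add: abs_square_less_1)
  then show ?thesis unfolding hemisphere_def by (simp add: norm_Pair)
qed

lemma interior_map:
  fixes h :: "real^'m \<Rightarrow> (real^'m) \<times> real"
  assumes hom: "homeomorphism cubeQ hemisphere h g" and v: "v \<in> hemisphere" "snd v > 0"
  shows "\<bar>g v $ j\<bar> < 1"
proof -
  define \<phi> where "\<phi> = (\<lambda>p::real^'m. g (p, sqrt (1 - (norm p)^2)))"
  have hemi: "\<And>p. p \<in> ball 0 1 \<Longrightarrow> (p, sqrt (1 - (norm p)^2)) \<in> hemisphere"
    using hemi_chart by auto
  have contg: "continuous_on hemisphere g" and gim: "g ` hemisphere = cubeQ"
    and hg: "\<And>y. y \<in> hemisphere \<Longrightarrow> h (g y) = y"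
    using hom unfolding homeomorphism_def by auto
  have c1: "continuous_on (ball 0 1) (\<lambda>p::real^'m. (p, sqrt (1 - (norm p)^2)))"
    by (intro continuous_intros)
  have im: "(\<lambda>p::real^'m. (p, sqrt (1 - (norm p)^2))) ` ball 0 1 \<subseteq> hemisphere" using hemi by auto
  have cphi: "continuous_on (ball 0 1) \<phi>"
    unfolding \<phi>_def using continuous_on_compose2[OF contg c1 im] .
  have inj: "inj_on \<phi> (ball 0 1)"
  proof (rule inj_onI)
    fix p q assume "p \<in> ball 0 1" "q \<in> ball 0 1" "\<phi> p = \<phi> q"
    then have "h (\<phi> p) = h (\<phi> q)" by simp
    then have "(p, sqrt (1 - (norm p)^2)) = (q, sqrt (1 - (norm q)^2))"
      unfolding \<phi>_def using hg[OF hemi[OF \<open>p \<in> ball 0 1\<close>]] hg[OF hemi[OF \<open>q \<in> ball 0 1\<close>]] by simp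
    then show "p = q" by simp
  qed
  have op: "open (\<phi> ` ball 0 1)" using invariance_of_domain[OF cphi open_ball inj] .
  have sub: "\<phi> ` ball 0 1 \<subseteq> cubeQ"
  proof
    fix x assume "x \<in> \<phi> ` ball 0 1"
    then obtain p where p: "p \<in> ball 0 1" "x = \<phi> p" by blast
    have "g (p, sqrt (1 - (norm p)^2)) \<in> g ` hemisphere" using hemi[OF p(1)] by blast
    then show "x \<in> cubeQ" using p gim unfolding \<phi>_def by simp
  qed
  have nv: "(norm (fst v))^2 + (snd v)^2 = 1"
  proof -
    have "norm v = 1" using v unfolding hemisphere_def by simp
    then have "sqrt ((norm (fst v))^2 + (snd v)^2) = 1" using norm_Pair[of "fst v" "snd v"] by simp
    then show ?thesis by simp
  qed
  have "(snd v)^2 > 0" using v by simp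
  then have "(norm (fst v))^2 < 1" using nv by linarith
  then have "norm (fst v) < 1" by (simp add: abs_square_less_1)
  moreover have "snd v = sqrt (1 - (norm (fst v))^2)"
  proof -
    have "1 - (norm (fst v))^2 = (snd v)^2" using nv by linarith
    then show ?thesis using v by simp
  qed
  ultimately have "g v = \<phi> (fst v)" "fst v \<in> ball 0 1" unfolding \<phi>_def
    by (metis prod.collapse, simp)
  then have "g v \<in> \<phi> ` ball 0 1" by blast
  then show ?thesis using open_sub_cube[OF op sub] by blast
qed

lemma hnorm: "homeomorphism cubeQ hemisphere h g \<Longrightarrow> u \<in> cubeQ \<Longrightarrow> norm (h u) = 1"
  unfolding homeomorphism_def hemisphere_def by auto

lemma branch_props:
  fixes h :: "real^'m \<Rightarrow> (real^'m) \<times> real"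
  assumes hom: "homeomorphism cubeQ hemisphere h g" and r: "r \<in> evenS" and a: "a > 0"
    and f: "f = (\<lambda>x. reflF h x - (0, a))" and y: "snd y > - a"
  shows "branch f r y \<in> Pcell r \<times> UNIV \<and> f (branch f r y) = y"
proof -
  have gh: "\<And>u. u \<in> cubeQ \<Longrightarrow> g (h u) = u" and hg: "\<And>v. v \<in> hemisphere \<Longrightarrow> h (g v) = v"
    and gim: "g ` hemisphere = cubeQ"
    using hom unfolding homeomorphism_def by auto
  have fx: "f (z, s) = exp s *\<^sub>R h (fold_cube z) - (0, a)" if "z \<in> Pcell r" for z s
    using reflF_cell[OF that r] f by simp
  have inj: "inj_on f (Pcell r \<times> UNIV)"
  proof (rule inj_onI)
    fix x1 x2 assume x1: "x1 \<in> Pcell r \<times> UNIV" and x2: "x2 \<in> Pcell r \<times> UNIV" and e: "f x1 = f x2"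
    obtain z1 s1 where 1: "x1 = (z1, s1)" "z1 \<in> Pcell r" using x1 by auto
    obtain z2 s2 where 2: "x2 = (z2, s2)" "z2 \<in> Pcell r" using x2 by auto
    have c1: "fold_cube z1 \<in> cubeQ" and c2: "fold_cube z2 \<in> cubeQ" using 1 2 fold_cube_cell by auto
    have ee: "exp s1 *\<^sub>R h (fold_cube z1) = exp s2 *\<^sub>R h (fold_cube z2)"
      using e fx 1 2 by simp
    then have "norm (exp s1 *\<^sub>R h (fold_cube z1)) = norm (exp s2 *\<^sub>R h (fold_cube z2))" by simp
    then have "exp s1 = exp s2" using hnorm[OF hom c1] hnorm[OF hom c2] by simp
    then have s: "s1 = s2" by simp
    then have "h (fold_cube z1) = h (fold_cube z2)" using ee by simp
    then have "fold_cube z1 = fold_cube z2" using gh c1 c2 by metis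
    then have "\<And>j. tri_fold (z1$j) = tri_fold (z2$j)" unfolding fold_cube_def by (metis vec_lambda_beta)
    then have "z1 = z2" using 1 2 tri_fold_inj unfolding Pcell_def vec_eq_iff by blast
    then show "x1 = x2" using 1 2 s by simp
  qed
  define w where "w = y + (0, a)"
  have sw: "snd w > 0" using y unfolding w_def by simp
  then have w0: "w \<noteq> 0" by auto
  then have nw: "norm w > 0" by simp
  define v where "v = w /\<^sub>R norm w"
  have sv: "snd v > 0" unfolding v_def using sw nw by simp
  have vh: "v \<in> hemisphere" unfolding hemisphere_def v_def using w0 sv v_def by simp
  define u where "u = g v"
  have ui: "\<bar>u$j\<bar> < 1" for j unfolding u_def using interior_map[OF hom vh sv] .
  define Y where "Y = (\<chi> j. 2 * of_int (r$j) + (-1) ^ nat \<bar>r$j\<bar> * u$j)"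
  have YP: "Y \<in> Pcell r" unfolding Pcell_def Y_def using tri_fold_inv_cell[OF ui] by simp
  have fY: "fold_cube Y = u" unfolding fold_cube_def Y_def using tri_fold_inv[OF ui] by (simp add: vec_eq_iff)
  have "f (Y, ln (norm w)) = norm w *\<^sub>R h (g v) - (0, a)" using fx[OF YP] nw fY u_def by simp
  also have "\<dots> = y" using hg[OF vh] nw unfolding v_def w_def by simp
  finally have "y \<in> f ` (Pcell r \<times> UNIV)" using YP by force
  then show ?thesis unfolding branch_def
    using the_inv_into_into[OF inj, of y] f_the_inv_into_f[OF inj, of y] by auto
qed

lemma snd_le_norm: "snd z \<le> norm (z :: 'a::real_normed_vector \<times> real)"
proof -
  have "sqrt ((snd z)^2) \<le> sqrt ((norm (fst z))^2 + (norm (snd z))^2)"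
    by (intro real_sqrt_le_mono) simp
  then have "\<bar>snd z\<bar> \<le> norm z" unfolding norm_prod_def by simp
  then show ?thesis by simp
qed

lemma branch_step:
  fixes h :: "real^'m \<Rightarrow> (real^'m) \<times> real"
  assumes hom: "homeomorphism cubeQ hemisphere h g" and r: "r \<in> evenS"
    and mM: "m < M" "M \<ge> 1" and a: "a \<ge> exp M - m"
    and f: "f = (\<lambda>x. reflF h x - (0, a))" and y: "snd y \<ge> M" "snd y \<ge> Eexp c"
  shows "snd (branch f r y) \<ge> M \<and> snd (branch f r y) \<ge> c"
proof -
  have "1 + M \<le> exp M" by simp
  then have a1: "a > 1" using a mM by linarith
  have "snd y > - a" using y a1 mM by linarith
  from branch_props[OF hom r _ f this] a1
  have B: "branch f r y \<in> Pcell r \<times> UNIV" "f (branch f r y) = y" by auto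
  obtain z s where zs: "branch f r y = (z, s)" "z \<in> Pcell r" using B by auto
  have c: "fold_cube z \<in> cubeQ" using fold_cube_cell[OF zs(2)] .
  have "exp s *\<^sub>R h (fold_cube z) - (0, a) = y" using B(2) zs reflF_cell[OF zs(2) r] f by simp
  then have "exp s *\<^sub>R h (fold_cube z) = y + (0, a)" by (simp add: algebra_simps)
  then have "norm (exp s *\<^sub>R h (fold_cube z)) = norm (y + (0, a))" by simp
  then have "exp s = norm (y + (0, a))" using hnorm[OF hom c] by simp
  also have "\<dots> \<ge> snd y + a" using snd_le_norm[of "y + (0,a)"] by simp
  finally have es: "exp s \<ge> snd y + a" .
  have "exp s > exp M" using es y a mM by linarith
  then have "s \<ge> M" by simp
  moreover have "exp s \<ge> exp c" using es y a1 unfolding Eexp_def by linarith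
  then have "s \<ge> c" by simp
  ultimately show ?thesis using zs by simp
qed

lemma chain_Suc: "l < k \<Longrightarrow> chain L l k = L l \<circ> chain L (Suc l) k"
  unfolding chain_def by (simp add: upt_conv_Cons)

lemma chain_same: "chain L k k = id"
  unfolding chain_def by simp

lemma chain_bound:
  fixes h :: "real^'m \<Rightarrow> (real^'m) \<times> real"
  assumes hom: "homeomorphism cubeQ hemisphere h g" and s: "\<forall>i. s i \<in> evenS"
    and mM: "m < M" "M \<ge> 1" and a: "a \<ge> exp M - m"
    and f: "f = (\<lambda>x. reflF h x - (0, a))" and L: "L = (\<lambda>i. branch f (s i))"
  shows "snd w \<ge> M \<Longrightarrow> snd w \<ge> (Eexp ^^ k) t \<Longrightarrow> l \<le> k \<Longrightarrow>
     snd (chain L l k w) \<ge> M \<and> snd (chain L l k w) \<ge> (Eexp ^^ l) t"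
proof (induction "k - l" arbitrary: l)
  case 0
  then have "l = k" by simp
  then show ?case using 0 by (simp add: chain_same)
next
  case (Suc n)
  then have lk: "l < k" by simp
  have IH: "snd (chain L (Suc l) k w) \<ge> M \<and> snd (chain L (Suc l) k w) \<ge> (Eexp ^^ Suc l) t"
    using Suc lk by (intro Suc.hyps) auto
  then have "snd (chain L (Suc l) k w) \<ge> Eexp ((Eexp ^^ l) t)" by simp
  from branch_step[OF hom s[rule_format] mM a f, of "chain L (Suc l) k w" "(Eexp ^^ l) t" "l"] IH this
  show ?case using chain_Suc[OF lk, of L] L by simp
qed

lemma Eexp_nonneg: "0 \<le> t \<Longrightarrow> 0 \<le> (Eexp ^^ n) t"
  by (induction n) (auto simp: Eexp_def)

theorem lemma3p2:
  fixes h :: "real^'m \<Rightarrow> (real^'m) \<times> real"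
    and \<alpha> m M a t :: real and s :: "nat \<Rightarrow> int^'m" and k l :: nat
    and f :: "(real^'m) \<times> real \<Rightarrow> (real^'m) \<times> real"
    and L :: "nat \<Rightarrow> (real^'m) \<times> real \<Rightarrow> (real^'m) \<times> real"
  assumes dim: "CARD('m) \<ge> 2"
    and homeo: "\<exists>g. homeomorphism cubeQ hemisphere h g"
    and bilip: "bi_lipschitz_on cubeQ h"
    and alpha: "0 < \<alpha>" "\<alpha> < 1"
    and mM: "m < M" "M \<ge> 1"
    and contr: "AE x in lborel. snd x \<le> m \<longrightarrow>
                  (\<forall>D. (reflF h has_derivative D) (at x) \<longrightarrow> onorm D \<le> \<alpha>)"
    and expand: "AE x in lborel. snd x \<ge> M \<longrightarrow>
                  (\<forall>D. (reflF h has_derivative D) (at x) \<longrightarrow> lower_norm D \<ge> 1 / \<alpha>)"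
    and a: "a \<ge> exp M - m"
    and f_def: "f = (\<lambda>x. reflF h x - (0, a))"
    and s: "\<forall>i. s i \<in> evenS"
    and L_def: "L = (\<lambda>i. branch f (s i))"
    and k: "2 \<le> k" and l: "1 \<le> l" "l \<le> k - 1" and t: "0 \<le> t"
  shows "norm (chain L l k (L k (0, (Eexp ^^ (k + 1)) t + M)))
           \<ge> snd (chain L l k (L k (0, (Eexp ^^ (k + 1)) t + M)))
       \<and> snd (chain L l k (L k (0, (Eexp ^^ (k + 1)) t + M))) \<ge> (Eexp ^^ l) t
       \<and> norm (chain L l k (0, (Eexp ^^ k) t + M)) \<ge> snd (chain L l k (0, (Eexp ^^ k) t + M))
       \<and> snd (chain L l k (0, (Eexp ^^ k) t + M)) \<ge> (Eexp ^^ l) t"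
proof -
  obtain g where hom: "homeomorphism cubeQ hemisphere h g" using homeo by blast
  have lk: "l \<le> k" using l by simp
  note CB = chain_bound[OF hom s mM a f_def L_def]
  have e0: "0 \<le> (Eexp ^^ k) t" using Eexp_nonneg[OF t] .
  have P2: "snd (chain L l k (0, (Eexp ^^ k) t + M)) \<ge> (Eexp ^^ l) t"
    using CB[of "(0, (Eexp ^^ k) t + M)" k t l] e0 lk mM by simp
  have A1: "snd (0::real^'m, (Eexp ^^ (k + 1)) t + M) \<ge> Eexp ((Eexp ^^ k) t)"
    using Eexp_nonneg[OF t, of "k+1"] mM by simp
  have A2: "snd (0::real^'m, (Eexp ^^ (k + 1)) t + M) \<ge> M"
    using Eexp_nonneg[OF t, of "k+1"] mM by simp
  have "snd (L k (0, (Eexp ^^ (k + 1)) t + M)) \<ge> M \<and>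
                   snd (L k (0, (Eexp ^^ (k + 1)) t + M)) \<ge> (Eexp ^^ k) t"
    using branch_step[OF hom s[rule_format] mM a f_def A2 A1] L_def by simp
  then have P1: "snd (chain L l k (L k (0, (Eexp ^^ (k + 1)) t + M))) \<ge> (Eexp ^^ l) t"
    using CB[of "L k (0, (Eexp ^^ (k + 1)) t + M)" k t l] lk by simp
  show ?thesis using P1 P2 snd_le_norm by blast
qed

end
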